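(* Let $X\in\mathbb{R}^{m\times m}$, $Y\in\mathbb{R}^{n\times n}$, and define $L:\mathbb{R}^{m\times n}\to\mathbb{R}^{m\times n}$ by $L(A)=XAY$. Then $L$ maps every semipositive $m\times n$ matrix to a semipositive matrix if and only if either $X$ is row positive and $Y$ is inverse nonnegative, or $-X$ is row positive and $-Y$ is inverse nonnegative.
   Context: For a matrix or vector, $\geq 0$ means entrywise nonnegative and $>0$ entrywise positive. A matrix $A\in\mathbb{R}^{m\times n}$ is semipositive if there exists $x\in\mathbb{R}^n$ with $x\geq 0$ and $Ax>0$. A square matrix $X$ is row positive if $X\geq 0$ and every row of $X$ contains a nonzero entry. A square matrix $Y$ is inverse nonnegative if $Y$ is invertible and $Y^{-1}\geq 0$. *)

theory Defs
  imports "HOL-Analysis.Analysis"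
begin

definition nonneg_vec :: "real^'n \<Rightarrow> bool" where
  "nonneg_vec x \<longleftrightarrow> (\<forall>i. x $ i \<ge> 0)"

definition pos_vec :: "real^'n \<Rightarrow> bool" where
  "pos_vec x \<longleftrightarrow> (\<forall>i. x $ i > 0)"

definition nonneg_mat :: "real^'n^'m \<Rightarrow> bool" where
  "nonneg_mat A \<longleftrightarrow> (\<forall>i j. A $ i $ j \<ge> 0)"

definition semipositive :: "real^'n^'m \<Rightarrow> bool" where
  "semipositive A \<longleftrightarrow> (\<exists>x. nonneg_vec x \<and> pos_vec (A *v x))"

definition row_positive :: "real^'n^'n \<Rightarrow> bool" where
  "row_positive X \<longleftrightarrow> nonneg_mat X \<and> (\<forall>i. \<exists>j. X $ i $ j \<noteq> 0)"

definition inverse_nonnegative :: "real^'n^'n \<Rightarrow> bool" where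
  "inverse_nonnegative Y \<longleftrightarrow> invertible Y \<and> nonneg_mat (matrix_inv Y)"

end

theory Submission
  imports Defs
begin

definition outer :: "real^'m \<Rightarrow> real^'n \<Rightarrow> real^'n^'m" where
  "outer a b = (\<chi> i j. a$i * b$j)"

lemma outer_mv: "(outer a b *v x) $ i = a$i * (\<Sum>j\<in>UNIV. b$j * x$j)"
  by (simp add: outer_def matrix_vector_mult_def sum_distrib_left mult.assoc)

lemma outer_XY: "X ** outer a b ** Y = outer (X *v a) (b v* Y)"
proof -
  have "(X ** outer a b ** Y) $ i $ k = (outer (X *v a) (b v* Y)) $ i $ k" for i k
    by (simp add: outer_def matrix_matrix_mult_def matrix_vector_mult_def vector_matrix_mult_def
        sum_distrib_left sum_distrib_right mult.assoc mult.left_commute)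
  then show ?thesis by (simp add: vec_eq_iff)
qed

lemma inv_props:
  fixes A :: "real^'n^'n"
  assumes "invertible A"
  shows "A ** matrix_inv A = mat 1 \<and> matrix_inv A ** A = mat 1"
proof -
  obtain B :: "real^'n^'n" where "A ** B = mat 1 \<and> B ** A = mat 1"
    using assms unfolding invertible_def by blast
  then show ?thesis unfolding matrix_inv_def
    by (rule someI[where P="\<lambda>B. A ** B = mat 1 \<and> B ** A = mat 1"])
qed

lemma neg_neg_mult: "(- X) ** A ** (- Y) = X ** A ** (Y :: real^'n^'n)"
  by (simp add: vec_eq_iff matrix_matrix_mult_def sum_negf)

lemma semipos_outer:
  assumes "semipositive (outer a b)"
  shows "\<exists>c. \<forall>i. a$i * c > 0"
  using assms unfolding semipositive_def pos_vec_def by (auto simp: outer_mv)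

lemma outer_semipos:
  assumes "\<forall>i. a$i > 0" and "b$k > 0"
  shows "semipositive (outer a b)"
proof -
  have "(\<Sum>j\<in>UNIV. b$j * axis k 1 $ j) = (\<Sum>j\<in>UNIV. if j = k then b$j else 0)"
    by (rule sum.cong) (auto simp: axis_def)
  then have "(\<Sum>j\<in>UNIV. b$j * axis k 1 $ j) = b$k" by simp
  then show ?thesis unfolding semipositive_def pos_vec_def nonneg_vec_def
    using assms by (intro exI[of _ "axis k 1"]) (auto simp: outer_mv axis_def)
qed

lemma step1:
  assumes H: "\<forall>A :: real^'n^'m. semipositive A \<longrightarrow> semipositive (X ** A ** Y)"
    and u: "\<forall>i. u$i > 0"
  shows "\<exists>c. \<forall>i. (X *v u)$i * c > 0"
proof -
  have "semipositive (outer u (axis (undefined::'n) (1::real)))"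
    using u by (intro outer_semipos[where k=undefined]) (auto simp: axis_def)
  then have "semipositive (X ** outer u (axis (undefined::'n) (1::real)) ** Y)" using H by blast
  then show ?thesis unfolding outer_XY by (rule semipos_outer)
qed

lemma rowpos:
  fixes Z :: "real^'m^'m"
  assumes nz: "\<And>u i. \<forall>l. u$l > 0 \<Longrightarrow> (Z *v u)$i \<noteq> 0"
    and one: "\<forall>i. (Z *v (\<chi> l. 1))$i > 0"
  shows "row_positive Z"
proof -
  have nn: "Z$i$j \<ge> 0" for i j
  proof (rule ccontr)
    assume "\<not> Z$i$j \<ge> 0"
    then have neg: "Z$i$j < 0" by simp
    define a where "a = (Z *v (\<chi> l. 1))$i"
    have a: "a > 0" using one a_def by auto
    define u :: "real^'m" where "u = (\<chi> l. - Z$i$j + (if l = j then a else 0))"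
    have "\<forall>l. u$l > 0" using neg a by (auto simp: u_def)
    then have "(Z *v u)$i \<noteq> 0" by (rule nz)
    moreover have "(Z *v u)$i = - Z$i$j * a + a * Z$i$j"
    proof -
    have "(Z *v u)$i = (\<Sum>l\<in>UNIV. Z$i$l * (- Z$i$j) + (if l = j then Z$i$l * a else 0))"
      unfolding u_def matrix_vector_mult_def vec_lambda_beta by (rule sum.cong) (auto simp: algebra_simps)
    also have "\<dots> = (\<Sum>l\<in>UNIV. Z$i$l) * (- Z$i$j) + Z$i$j * a"
      by (simp only: sum.distrib) (simp add: sum_distrib_right sum_negf)
    also have "(\<Sum>l\<in>UNIV. Z$i$l) = a" by (simp add: a_def matrix_vector_mult_def)
    finally have "(Z *v u)$i = - Z$i$j * a + a * Z$i$j" by simp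
    then show ?thesis .
    qed
    ultimately show False by simp
  qed
  have "\<exists>j. Z$i$j \<noteq> 0" for i
  proof (rule ccontr)
    assume "\<not> ?thesis"
    then have "(Z *v (\<chi> l. 1))$i = 0" by (simp add: matrix_vector_mult_def)
    with one show False by (metis less_irrefl)
  qed
  with nn show ?thesis by (simp add: row_positive_def nonneg_mat_def)
qed

lemma step_Y:
  assumes H: "\<forall>A :: real^'n^'m. semipositive A \<longrightarrow> semipositive (X ** A ** Y)"
    and one: "\<forall>i. (X *v (\<chi> l. 1))$i > 0"
    and v: "v$k > 0"
  shows "\<exists>k. (v v* Y)$k > 0"
proof -
  have "semipositive (outer (\<chi> l. 1 :: real^'m) v)"
    using v by (intro outer_semipos[where k=k]) auto
  then have "semipositive (outer (X *v (\<chi> l. 1)) (v v* Y))" using H outer_XY by metis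
  then obtain x where x: "nonneg_vec x"
    and p: "\<forall>i. (X *v (\<chi> l. 1))$i * (\<Sum>j\<in>UNIV. (v v* Y)$j * x$j) > 0"
    unfolding semipositive_def pos_vec_def by (auto simp: outer_mv)
  have "(\<Sum>j\<in>UNIV. (v v* Y)$j * x$j) > 0"
    using p[rule_format, of undefined] one[rule_format, of undefined]
    by (simp add: zero_less_mult_iff)
  show ?thesis
  proof (rule ccontr)
    assume "\<not> ?thesis"
    then have "\<forall>j. (v v* Y)$j * x$j \<le> 0" using x
      by (auto simp: nonneg_vec_def mult_nonpos_nonneg not_less)
    then have "(\<Sum>j\<in>UNIV. (v v* Y)$j * x$j) \<le> 0" by (simp add: sum_nonpos)
    with \<open>(\<Sum>j\<in>UNIV. (v v* Y)$j * x$j) > 0\<close> show False by simp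
  qed
qed

lemma monotone_inv:
  fixes Y :: "real^'n^'n"
  assumes M: "\<And>v k. v$k > 0 \<Longrightarrow> \<exists>k. (v v* Y)$k > 0"
  shows "inverse_nonnegative Y"
proof -
  have mono: "\<forall>k. w$k \<ge> 0" if "\<forall>k. (w v* Y)$k \<ge> 0" for w
  proof (rule ccontr)
    assume "\<not> ?thesis"
    then obtain k where "(- w)$k > 0" by (auto simp: not_le)
    then obtain k' where "((- w) v* Y)$k' > 0" using M by blast
    moreover have "((- w) v* Y) = - (w v* Y)"
      by (simp add: vec_eq_iff vector_matrix_mult_def sum_negf)
    ultimately show False using that[rule_format, of k'] by simp
  qed
  have ker: "\<forall>x. transpose Y *v x = 0 \<longrightarrow> x = 0"
  proof (intro allI impI)
    fix x assume "transpose Y *v x = 0"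
    then have 0: "x v* Y = 0" by simp
    have "\<forall>k. x$k \<ge> 0" using mono[of x] 0 by simp
    moreover have "(- x) v* Y = 0"
      using 0 by (simp add: vec_eq_iff vector_matrix_mult_def sum_negf)
    then have "\<forall>k. (-x)$k \<ge> 0" using mono[of "-x"] by simp
    ultimately show "x = 0" by (simp add: vec_eq_iff order_antisym)
  qed
  then have "\<exists>B. B ** transpose Y = mat 1" using matrix_left_invertible_ker by blast
  then have "\<exists>B. Y ** B = mat 1" using left_invertible_transpose by blast
  then have inv: "invertible Y" using invertible_right_inverse by blast
  then have "Y ** matrix_inv Y = mat 1 \<and> matrix_inv Y ** Y = mat 1"
    by (rule inv_props)
  then have li: "matrix_inv Y ** Y = mat 1" by simp
  have "matrix_inv Y $ j $ i \<ge> 0" for i j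
  proof -
    define w where "w = axis j (1::real) v* matrix_inv Y"
    have "w v* Y = axis j 1" by (simp add: w_def vector_matrix_mul_assoc li)
    then have "\<forall>k. w$k \<ge> 0" using mono[of w] by (simp add: axis_def)
    moreover have "w$i = (\<Sum>l\<in>UNIV. if l = j then matrix_inv Y $ l $ i else 0)"
      unfolding w_def vector_matrix_mult_def vec_lambda_beta by (rule sum.cong) (auto simp: axis_def)
    then have "w$i = matrix_inv Y $ j $ i" by simp
    ultimately show ?thesis by metis
  qed
  with inv show ?thesis by (simp add: inverse_nonnegative_def nonneg_mat_def)
qed

lemma necessity_pos:
  assumes H: "\<forall>A :: real^'n^'m. semipositive A \<longrightarrow> semipositive (X ** A ** Y)"
    and one: "\<forall>i. (X *v (\<chi> l. 1))$i > 0"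
  shows "row_positive X \<and> inverse_nonnegative Y"
proof
  show "row_positive X"
  proof (rule rowpos[OF _ one])
    fix u :: "real^'m" and i assume "\<forall>l. u$l > 0"
    then obtain c where "\<forall>i. (X *v u)$i * c > 0" using step1[OF H] by blast
    then show "(X *v u)$i \<noteq> 0" by (metis mult_zero_left less_irrefl)
  qed
  show "inverse_nonnegative Y"
    by (rule monotone_inv) (rule step_Y[OF H one])
qed

lemma suff_pos:
  assumes R: "row_positive X" and I: "inverse_nonnegative Y"
    and A: "semipositive A"
  shows "semipositive (X ** A ** Y)"
proof -
  obtain x where x: "nonneg_vec x" and Ax: "pos_vec (A *v x)"
    using A unfolding semipositive_def by blast
  have inv: "invertible Y" and nn: "nonneg_mat (matrix_inv Y)"
    using I by (auto simp: inverse_nonnegative_def)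
  from inv have "Y ** matrix_inv Y = mat 1 \<and> matrix_inv Y ** Y = mat 1"
    by (rule inv_props)
  then have ri: "Y ** matrix_inv Y = mat 1" by simp
  define z where "z = matrix_inv Y *v x"
  have z: "nonneg_vec z" using x nn
    by (auto simp: z_def nonneg_vec_def nonneg_mat_def matrix_vector_mult_def intro!: sum_nonneg)
  have eq: "(X ** A ** Y) *v z = X *v (A *v x)"
    by (simp add: z_def matrix_vector_mul_assoc[symmetric] ri)
       (simp add: matrix_vector_mul_assoc matrix_mul_assoc ri)
  have "pos_vec (X *v (A *v x))"
    unfolding pos_vec_def
  proof
    fix i
    obtain j where j: "X$i$j \<noteq> 0" using R by (auto simp: row_positive_def)
    have X0: "\<forall>i j. X$i$j \<ge> 0" using R by (auto simp: row_positive_def nonneg_mat_def)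
    have pos: "\<forall>l. (A *v x)$l > 0" using Ax by (simp add: pos_vec_def)
    have "0 < X$i$j * (A *v x)$j" using j X0 pos
      by (metis less_eq_real_def mult_pos_pos)
    also have "\<dots> \<le> (\<Sum>l\<in>UNIV. X$i$l * (A *v x)$l)"
      by (rule member_le_sum[where f="\<lambda>l. X$i$l * (A *v x)$l"])
         (auto intro: mult_nonneg_nonneg simp: X0 less_imp_le pos)
    finally show "(X *v (A *v x))$i > 0" by (simp add: matrix_vector_mult_def)
  qed
  with z eq show ?thesis unfolding semipositive_def by metis
qed

theorem mainTheorem8:
  fixes X :: "real^'m^'m" and Y :: "real^'n^'n"
  defines "L \<equiv> (\<lambda>A :: real^'n^'m. X ** A ** Y)"
  shows "(\<forall>A :: real^'n^'m. semipositive A \<longrightarrow> semipositive (L A)) \<longleftrightarrow>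
         ((row_positive X \<and> inverse_nonnegative Y) \<or>
          (row_positive (- X) \<and> inverse_nonnegative (- Y)))"
proof
  assume H0: "\<forall>A :: real^'n^'m. semipositive A \<longrightarrow> semipositive (L A)"
  then have H: "\<forall>A :: real^'n^'m. semipositive A \<longrightarrow> semipositive (X ** A ** Y)"
    by (simp add: L_def)
  then have H': "\<forall>A :: real^'n^'m. semipositive A \<longrightarrow> semipositive ((- X) ** A ** (- Y))"
    by (simp add: neg_neg_mult)
  obtain c where c: "\<forall>i. (X *v (\<chi> l. 1))$i * c > 0"
    using step1[OF H, of "\<chi> l. 1"] by auto
  show "(row_positive X \<and> inverse_nonnegative Y) \<or>
          (row_positive (- X) \<and> inverse_nonnegative (- Y))"
  proof (cases "c > 0")
    case True
    then have "\<forall>i. (X *v (\<chi> l. 1))$i > 0" using c by (auto simp: zero_less_mult_iff)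
    then show ?thesis using necessity_pos[OF H] by blast
  next
    case False
    then have "\<forall>i. (X *v (\<chi> l. 1))$i < 0" using c by (auto simp: zero_less_mult_iff)
    then have "\<forall>i. ((- X) *v (\<chi> l. 1))$i > 0"
      by (simp add: matrix_vector_mult_def sum_negf)
    then show ?thesis using necessity_pos[OF H'] by blast
  qed
next
  assume "(row_positive X \<and> inverse_nonnegative Y) \<or>
          (row_positive (- X) \<and> inverse_nonnegative (- Y))"
  then show "\<forall>A :: real^'n^'m. semipositive A \<longrightarrow> semipositive (L A)"
    unfolding L_def using suff_pos[of X Y] suff_pos[of "-X" "-Y"] neg_neg_mult by metis
qed

end
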